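(* Let $k,n$ be integers with $2\le k\le n$. Then \[ S(n,n-k,k)=\binom{n}{k}-T(n,k+1,k). \] Moreover, if $k\le n-1$, then also $T(n,k+1,k)=C(n,n-k,n-k-1)$, so that $C(n,n-k,n-k-1)=\binom nk - S(n,n-k,k)$.
   Context: A CNF formula over variables $x_1,\dots,x_n$ is a conjunction of clauses, each clause a disjunction of literals (variables or negated variables); the width of a clause is its number of literals; a $k$-CNF is a CNF all of whose clauses have width at most $k$. For an assignment $a\in\{0,1\}^n$, $\mathrm{wt}(a)=\sum_i a_i$ is its Hamming weight. For a formula $F$, $\mathrm{sat}_t(F)$ is the set of satisfying assignments of $F$ of Hamming weight exactly $t$. $F$ is called $t$-admissible if it has no satisfying assignment of Hamming weight less than $t$. $S(n,t,k)$ is the maximum of $|\mathrm{sat}_t(F)|$ over all $t$-admissible $k$-CNF formulas $F$ on $n$ variables. A $k$-set system over a universe $U$ is a collection of $k$-element subsets of $U$; its size is the number of sets. The Turán number $T(n,q,k)$ is the size of the smallest $k$-set system $\mathcal S$ over $[n]$ such that every $q$-element subset of $[n]$ contains at least one member of $\mathcal S$ (if $q>n$ this is vacuous and $T(n,q,k)=0$). The covering number $C(n,q,k)$ is the size of the smallest $q$-set system $\mathcal S$ over $[n]$ such that every $k$-element subset of $[n]$ is contained in at least one member of $\mathcal S$. *)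

theory Defs
  imports Main
begin

(* A literal is a pair (i, b): b = True means x_i, b = False means the negation of x_i.
   An assignment a in {0,1}^n is represented by the set of indices i with a_i = 1,
   a subset of {1..n}; its Hamming weight is the cardinality of that set. *)

type_synonym literal = "nat \<times> bool"
type_synonym clause = "literal set"
type_synonym cnf = "clause set"

definition is_cnf :: "nat \<Rightarrow> cnf \<Rightarrow> bool" where
  "is_cnf n F \<longleftrightarrow> finite F \<and> (\<forall>C\<in>F. finite C \<and> (\<forall>(i,b)\<in>C. i \<in> {1..n}))"

definition is_kcnf :: "nat \<Rightarrow> nat \<Rightarrow> cnf \<Rightarrow> bool" where
  "is_kcnf n k F \<longleftrightarrow> is_cnf n F \<and> (\<forall>C\<in>F. card C \<le> k)"

definition sat_lit :: "nat set \<Rightarrow> literal \<Rightarrow> bool" where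
  "sat_lit A l \<longleftrightarrow> (fst l \<in> A \<longleftrightarrow> snd l)"

definition satisfies :: "nat set \<Rightarrow> cnf \<Rightarrow> bool" where
  "satisfies A F \<longleftrightarrow> (\<forall>C\<in>F. \<exists>l\<in>C. sat_lit A l)"

definition assignments :: "nat \<Rightarrow> nat set set" where
  "assignments n = Pow {1..n}"

definition sat_t :: "nat \<Rightarrow> nat \<Rightarrow> cnf \<Rightarrow> nat set set" where
  "sat_t n t F = {A \<in> assignments n. card A = t \<and> satisfies A F}"

definition admissible :: "nat \<Rightarrow> nat \<Rightarrow> cnf \<Rightarrow> bool" where
  "admissible n t F \<longleftrightarrow> (\<forall>A\<in>assignments n. satisfies A F \<longrightarrow> card A \<ge> t)"

definition S_num :: "nat \<Rightarrow> nat \<Rightarrow> nat \<Rightarrow> nat" where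
  "S_num n t k = Max {card (sat_t n t F) | F. is_kcnf n k F \<and> admissible n t F}"

definition T_num :: "nat \<Rightarrow> nat \<Rightarrow> nat \<Rightarrow> nat" where
  "T_num n q k = (LEAST m. \<exists>\<S>. \<S> \<subseteq> {X. X \<subseteq> {1..n} \<and> card X = k}
      \<and> (\<forall>Q. Q \<subseteq> {1..n} \<and> card Q = q \<longrightarrow> (\<exists>X\<in>\<S>. X \<subseteq> Q))
      \<and> card \<S> = m)"

definition C_num :: "nat \<Rightarrow> nat \<Rightarrow> nat \<Rightarrow> nat" where
  "C_num n q k = (LEAST m. \<exists>\<S>. \<S> \<subseteq> {X. X \<subseteq> {1..n} \<and> card X = q}
      \<and> (\<forall>K. K \<subseteq> {1..n} \<and> card K = k \<longrightarrow> (\<exists>X\<in>\<S>. K \<subseteq> X))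
      \<and> card \<S> = m)"

end

theory Submission
  imports Defs
begin

definition Kset :: "nat \<Rightarrow> nat \<Rightarrow> nat set set" where
  "Kset n k = {X. X \<subseteq> {1..n} \<and> card X = k}"

definition turan :: "nat \<Rightarrow> nat \<Rightarrow> nat \<Rightarrow> nat set set \<Rightarrow> bool" where
  "turan n q k S \<longleftrightarrow> S \<subseteq> Kset n k \<and> (\<forall>Q. Q \<subseteq> {1..n} \<and> card Q = q \<longrightarrow> (\<exists>X\<in>S. X \<subseteq> Q))"

definition cover :: "nat \<Rightarrow> nat \<Rightarrow> nat \<Rightarrow> nat set set \<Rightarrow> bool" where
  "cover n q k S \<longleftrightarrow> S \<subseteq> Kset n q \<and> (\<forall>K. K \<subseteq> {1..n} \<and> card K = k \<longrightarrow> (\<exists>X\<in>S. K \<subseteq> X))"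

lemma T_num_alt: "T_num n q k = (LEAST m. \<exists>S. turan n q k S \<and> card S = m)"
  by (simp add: T_num_def turan_def Kset_def)

lemma C_num_alt: "C_num n q k = (LEAST m. \<exists>S. cover n q k S \<and> card S = m)"
  by (simp add: C_num_def cover_def Kset_def)

lemma card_Kset: "card (Kset n k) = n choose k"
  using n_subsets[of "{1..n}" k] by (simp add: Kset_def)

lemma finite_Kset: "finite (Kset n k)"
  by (rule finite_subset[of _ "Pow {1..n}"]) (auto simp: Kset_def)

lemma compl_card: "X \<subseteq> {1..n} \<Longrightarrow> card ({1..n} - X) = n - card X"
  by (simp add: card_Diff_subset finite_subset)

lemma compl_compl: "X \<subseteq> {1..(n::nat)} \<Longrightarrow> {1..n} - ({1..n} - X) = X"
  by auto

lemma turan_Kset: assumes "k \<le> q" shows "turan n q k (Kset n k)"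
  unfolding turan_def
proof (intro conjI allI impI)
  fix Q assume Q: "Q \<subseteq> {1..n} \<and> card Q = q"
  then obtain X where "X \<subseteq> Q" "card X = k" using assms obtain_subset_with_card_n[of k Q] by auto
  then show "\<exists>X\<in>Kset n k. X \<subseteq> Q" using Q by (auto simp: Kset_def)
qed auto

lemma T_witness: "k \<le> q \<Longrightarrow> \<exists>S. turan n q k S \<and> card S = T_num n q k"
  unfolding T_num_alt by (rule LeastI_ex) (use turan_Kset in blast)

lemma T_le: "turan n q k S \<Longrightarrow> T_num n q k \<le> card S"
  unfolding T_num_alt by (rule Least_le) blast

lemma card_compl_img:
  assumes "S' \<subseteq> Kset n k"
  shows "card ((\<lambda>Z. {1..n} - Z) ` (Kset n k - S')) = (n choose k) - card S'"
proof -
  have "inj_on (\<lambda>Z. {1..n} - Z) (Kset n k - S')"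
    unfolding inj_on_def Kset_def by (metis (no_types, lifting) DiffD1 compl_compl mem_Collect_eq)
  then have "card ((\<lambda>Z. {1..n} - Z) ` (Kset n k - S')) = card (Kset n k - S')"
    by (rule card_image)
  also have "\<dots> = card (Kset n k) - card S'"
    using assms finite_Kset by (meson card_Diff_subset finite_subset)
  finally show ?thesis by (simp add: card_Kset)
qed

lemma upper:
  assumes F: "is_kcnf n k F" and adm: "admissible n (n-k) F" and kn: "k \<le> n"
  shows "card (sat_t n (n-k) F) + T_num n (k+1) k \<le> n choose k"
proof -
  define S where "S = {Z \<in> Kset n k. \<not> satisfies ({1..n} - Z) F}"
  have SK: "S \<subseteq> Kset n k" by (auto simp: S_def)
  have tur: "turan n (k+1) k S"
    unfolding turan_def
  proof (intro conjI SK allI impI)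
    fix Q assume Q: "Q \<subseteq> {1..n} \<and> card Q = k+1"
    define A where "A = {1..n} - Q"
    have "card Q \<le> n" using Q card_mono[of "{1..n}" Q] by auto
    then have "card A < n - k" using Q compl_card[of Q n] by (simp add: A_def)
    moreover have "A \<subseteq> {1..n}" by (auto simp: A_def)
    ultimately have "\<not> satisfies A F" using adm by (force simp: admissible_def assignments_def)
    then obtain C where C: "C \<in> F" "\<forall>l\<in>C. \<not> sat_lit A l" by (auto simp: satisfies_def)
    have Cfin: "finite C" and Cvar: "\<forall>(i,b)\<in>C. i \<in> {1..n}" and Ck: "card C \<le> k"
      using F C(1) by (auto simp: is_kcnf_def is_cnf_def)
    define P where "P = {i. (i,True) \<in> C}"
    have PQ: "P \<subseteq> Q"
    proof
      fix i assume "i \<in> P"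
      then have "(i,True) \<in> C" by (simp add: P_def)
      then have "i \<in> {1..n}" "i \<notin> A" using Cvar C(2) by (auto simp: sat_lit_def)
      then show "i \<in> Q" by (auto simp: A_def)
    qed
    have "card P \<le> card C"
      by (rule card_inj_on_le[of "\<lambda>i. (i,True)"]) (auto simp: inj_on_def P_def Cfin)
    then have "card P < card Q" using Ck Q by simp
    then obtain q where q: "q \<in> Q" "q \<notin> P"
      using PQ by (metis card_mono finite_subset leD subsetI Q finite_atLeastAtMost)
    define Z where "Z = Q - {q}"
    have Zsub: "Z \<subseteq> Q" by (auto simp: Z_def)
    have "card Z = k" using Q q by (simp add: Z_def finite_subset)
    moreover have "Z \<subseteq> {1..n}" using Q by (auto simp: Z_def)
    moreover have "{1..n} - Z = insert q A" using Q q by (auto simp: Z_def A_def)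
    moreover have "\<not> satisfies (insert q A) F"
      unfolding satisfies_def
    proof
      assume "\<forall>C\<in>F. \<exists>l\<in>C. sat_lit (insert q A) l"
      then obtain l where l: "l \<in> C" "sat_lit (insert q A) l" using C(1) by blast
      obtain i b where lib: "l = (i,b)" by (cases l)
      show False
      proof (cases b)
        case True
        then have "i \<in> P" using l lib by (simp add: P_def)
        then show False using l lib True C(2) q by (auto simp: sat_lit_def)
      next
        case False
        then show False using l lib C(2) by (auto simp: sat_lit_def)
      qed
    qed
    ultimately have "Z \<in> S" by (simp add: S_def Kset_def)
    then show "\<exists>X\<in>S. X \<subseteq> Q" using Zsub by blast
  qed
  have eq: "sat_t n (n-k) F = (\<lambda>Z. {1..n} - Z) ` (Kset n k - S)"
  proof (rule set_eqI, rule iffI)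
    fix x assume x: "x \<in> sat_t n (n-k) F"
    then have xs: "x \<subseteq> {1..n}" "card x = n - k" "satisfies x F"
      by (auto simp: sat_t_def assignments_def)
    define Z where "Z = {1..n} - x"
    have "card Z = k" using xs kn compl_card[of x n] by (simp add: Z_def)
    then have "Z \<in> Kset n k - S" using xs compl_compl[of x n] by (auto simp: Z_def Kset_def S_def)
    moreover have "x = {1..n} - Z" using xs by (auto simp: Z_def)
    ultimately show "x \<in> (\<lambda>Z. {1..n} - Z) ` (Kset n k - S)" by blast
  next
    fix x assume "x \<in> (\<lambda>Z. {1..n} - Z) ` (Kset n k - S)"
    then obtain Z where Z: "Z \<in> Kset n k" "Z \<notin> S" "x = {1..n} - Z" by blast
    then show "x \<in> sat_t n (n-k) F"
      using compl_card[of Z n] by (auto simp: sat_t_def assignments_def Kset_def S_def)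
  qed
  have "card (sat_t n (n-k) F) = (n choose k) - card S"
    unfolding eq by (rule card_compl_img[OF SK])
  moreover have "card S \<le> n choose k"
    using card_mono[OF finite_Kset SK] card_Kset by metis
  moreover have "T_num n (k+1) k \<le> card S" by (rule T_le[OF tur])
  ultimately show ?thesis by linarith
qed

lemma lower:
  assumes tur: "turan n (k+1) k S" and kn: "k \<le> n"
  shows "\<exists>F. is_kcnf n k F \<and> admissible n (n-k) F \<and> card (sat_t n (n-k) F) = (n choose k) - card S"
proof -
  have SK: "S \<subseteq> Kset n k" using tur by (simp add: turan_def)
  define F where "F = (\<lambda>X. (\<lambda>i. (i,True)) ` X) ` S"
  have satF: "satisfies A F \<longleftrightarrow> (\<forall>X\<in>S. X \<inter> A \<noteq> {})" for A
    by (auto simp: satisfies_def sat_lit_def F_def)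
  have clause: "finite C \<and> (\<forall>(i, b)\<in>C. i \<in> {1..n}) \<and> card C \<le> k" if CF: "C \<in> F" for C
  proof -
    obtain X where X: "X \<in> S" "C = (\<lambda>i. (i,True)) ` X" using CF unfolding F_def by blast
    then have Xs: "X \<subseteq> {1..n}" "card X = k" using SK by (auto simp: Kset_def)
    have "finite X" using Xs(1) finite_subset by blast
    then show ?thesis using X Xs card_image_le[of X "\<lambda>i. (i,True)"] by auto
  qed
  have "finite F" unfolding F_def using finite_subset[OF SK finite_Kset] by simp
  then have "is_kcnf n k F" using clause unfolding is_kcnf_def is_cnf_def by blast
  moreover have "admissible n (n-k) F"
    unfolding admissible_def
  proof (intro ballI impI)
    fix A assume A: "A \<in> assignments n" "satisfies A F"
    then have As: "A \<subseteq> {1..n}" by (simp add: assignments_def)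
    show "n - k \<le> card A"
    proof (rule ccontr)
      assume "\<not> n - k \<le> card A"
      then have "k + 1 \<le> card ({1..n} - A)" using compl_card[OF As] by simp
      then obtain Q where Q: "Q \<subseteq> {1..n} - A" "card Q = k+1"
        using obtain_subset_with_card_n by metis
      then obtain X where "X \<in> S" "X \<subseteq> Q" using tur unfolding turan_def by blast
      then show False using A(2) Q satF by blast
    qed
  qed
  moreover have eq: "sat_t n (n-k) F = (\<lambda>Z. {1..n} - Z) ` (Kset n k - S)"
  proof (rule set_eqI, rule iffI)
    fix x assume x: "x \<in> sat_t n (n-k) F"
    then have xs: "x \<subseteq> {1..n}" "card x = n - k" "satisfies x F"
      by (auto simp: sat_t_def assignments_def)
    define Z where "Z = {1..n} - x"
    have "card Z = k" using xs kn compl_card[of x n] by (simp add: Z_def)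
    moreover have "Z \<notin> S" using xs(3) satF by (auto simp: Z_def)
    ultimately have "Z \<in> Kset n k - S" by (auto simp: Z_def Kset_def)
    moreover have "x = {1..n} - Z" using xs by (auto simp: Z_def)
    ultimately show "x \<in> (\<lambda>Z. {1..n} - Z) ` (Kset n k - S)" by blast
  next
    fix x assume "x \<in> (\<lambda>Z. {1..n} - Z) ` (Kset n k - S)"
    then obtain Z where Z: "Z \<in> Kset n k" "Z \<notin> S" "x = {1..n} - Z" by blast
    have Zs: "Z \<subseteq> {1..n}" "card Z = k" using Z by (auto simp: Kset_def)
    have "satisfies x F" unfolding satF
    proof
      fix X assume X: "X \<in> S"
      show "X \<inter> x \<noteq> {}"
      proof
        assume "X \<inter> x = {}"
        then have "X \<subseteq> Z" using X SK Z(3) by (auto simp: Kset_def)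
        moreover have "card X = card Z" using X SK Zs by (auto simp: Kset_def)
        ultimately have "X = Z" using card_subset_eq[of Z X] Zs finite_subset by blast
        then show False using X Z(2) by simp
      qed
    qed
    then show "x \<in> sat_t n (n-k) F"
      using compl_card[of Z n] Z Zs by (auto simp: sat_t_def assignments_def)
  qed
  moreover have "card (sat_t n (n-k) F) = (n choose k) - card S"
    unfolding eq by (rule card_compl_img[OF SK])
  ultimately show ?thesis by blast
qed

lemma T_le_choose: "T_num n (k+1) k \<le> n choose k"
  using T_le[OF turan_Kset[of k "k+1" n]] card_Kset by simp

lemma S_eq:
  assumes kn: "k \<le> n"
  shows "S_num n (n-k) k = (n choose k) - T_num n (k+1) k"
proof -
  let ?M = "{card (sat_t n (n-k) F) | F. is_kcnf n k F \<and> admissible n (n-k) F}"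
  have bound: "\<forall>y\<in>?M. y \<le> (n choose k) - T_num n (k+1) k"
    using upper[OF _ _ kn] by fastforce
  then have fin: "finite ?M"
    using finite_nat_set_iff_bounded_le by blast
  obtain S where S: "turan n (k+1) k S" "card S = T_num n (k+1) k"
    using T_witness[of k "k+1" n] by auto
  obtain F where "is_kcnf n k F" "admissible n (n-k) F" "card (sat_t n (n-k) F) = (n choose k) - card S"
    using lower[OF S(1) kn] by blast
  then have mem: "(n choose k) - T_num n (k+1) k \<in> ?M" using S(2) by force
  show ?thesis unfolding S_num_def by (rule Max_eqI[OF fin]) (use bound mem in auto)
qed

lemma inj_compl: assumes "S \<subseteq> Kset n k" shows "inj_on (\<lambda>X. {1..n} - X) S"
proof (rule inj_onI)
  fix x y assume "x \<in> S" "y \<in> S" "{1..n} - x = {1..n} - y"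
  moreover have "x \<subseteq> {1..n}" "y \<subseteq> {1..n}" using assms \<open>x \<in> S\<close> \<open>y \<in> S\<close> by (auto simp: Kset_def)
  ultimately show "x = y" by (metis compl_compl)
qed

lemma T_C:
  assumes kn: "k + 1 \<le> n"
  shows "T_num n (k+1) k = C_num n (n-k) (n-k-1)"
proof -
  have "(\<exists>S. turan n (k+1) k S \<and> card S = m) \<longleftrightarrow> (\<exists>S. cover n (n-k) (n-k-1) S \<and> card S = m)" for m
  proof
    assume "\<exists>S. turan n (k+1) k S \<and> card S = m"
    then obtain S where S: "turan n (k+1) k S" "card S = m" by blast
    have SK: "S \<subseteq> Kset n k" using S by (simp add: turan_def)
    have H: "\<And>Q. Q \<subseteq> {1..n} \<Longrightarrow> card Q = k+1 \<Longrightarrow> \<exists>X\<in>S. X \<subseteq> Q"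
      using S(1) unfolding turan_def by blast
    have inj: "inj_on (\<lambda>X. {1..n} - X) S" using SK by (rule inj_compl)
    have "cover n (n-k) (n-k-1) ((\<lambda>X. {1..n} - X) ` S)"
      unfolding cover_def
    proof (intro conjI allI impI)
      show "(\<lambda>X. {1..n} - X) ` S \<subseteq> Kset n (n-k)"
      proof (rule image_subsetI)
        fix X assume "X \<in> S"
        then have "X \<subseteq> {1..n}" "card X = k" using SK by (auto simp: Kset_def)
        then have "card ({1..n} - X) = n - k" using compl_card[of X n] by simp
        then show "{1..n} - X \<in> Kset n (n-k)" by (simp add: Kset_def)
      qed
    next
      fix K assume K: "K \<subseteq> {1..n} \<and> card K = n-k-1"
      have "card ({1..n} - K) = k+1" using K compl_card[of K n] kn by simp
      then obtain X where X: "X \<in> S" "X \<subseteq> {1..n} - K" using H[OF Diff_subset] by blast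
      have "K \<subseteq> {1..n} - X" using X(2) K by blast
      then show "\<exists>Y\<in>(\<lambda>X. {1..n} - X) ` S. K \<subseteq> Y" using X(1) by blast
    qed
    then show "\<exists>S. cover n (n-k) (n-k-1) S \<and> card S = m"
      using card_image[OF inj] S(2) by metis
  next
    assume "\<exists>S. cover n (n-k) (n-k-1) S \<and> card S = m"
    then obtain S where S: "cover n (n-k) (n-k-1) S" "card S = m" by blast
    have SK: "S \<subseteq> Kset n (n-k)" using S by (simp add: cover_def)
    have H: "\<And>K. K \<subseteq> {1..n} \<Longrightarrow> card K = n-k-1 \<Longrightarrow> \<exists>X\<in>S. K \<subseteq> X"
      using S(1) unfolding cover_def by blast
    have inj: "inj_on (\<lambda>X. {1..n} - X) S" using SK by (rule inj_compl)
    have "turan n (k+1) k ((\<lambda>X. {1..n} - X) ` S)"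
      unfolding turan_def
    proof (intro conjI allI impI)
      show "(\<lambda>X. {1..n} - X) ` S \<subseteq> Kset n k"
      proof (rule image_subsetI)
        fix X assume "X \<in> S"
        then have "X \<subseteq> {1..n}" "card X = n - k" using SK by (auto simp: Kset_def)
        then have "card ({1..n} - X) = k" using compl_card[of X n] kn by simp
        then show "{1..n} - X \<in> Kset n k" by (simp add: Kset_def)
      qed
    next
      fix Q assume Q: "Q \<subseteq> {1..n} \<and> card Q = k+1"
      have "card ({1..n} - Q) = n-k-1" using Q compl_card[of Q n] kn by simp
      then obtain X where X: "X \<in> S" "{1..n} - Q \<subseteq> X" using H[OF Diff_subset] by blast
      have "{1..n} - X \<subseteq> Q" using X(2) by blast
      then show "\<exists>Y\<in>(\<lambda>X. {1..n} - X) ` S. Y \<subseteq> Q" using X(1) by blast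
    qed
    then show "\<exists>S. turan n (k+1) k S \<and> card S = m"
      using card_image[OF inj] S(2) by metis
  qed
  then show ?thesis unfolding T_num_alt C_num_alt by simp
qed

theorem theorem1:
  fixes n k :: nat
  assumes "2 \<le> k" and "k \<le> n"
  shows "int (S_num n (n - k) k) = int (n choose k) - int (T_num n (k + 1) k)
    \<and> (k \<le> n - 1 \<longrightarrow>
         T_num n (k + 1) k = C_num n (n - k) (n - k - 1)
       \<and> int (C_num n (n - k) (n - k - 1)) = int (n choose k) - int (S_num n (n - k) k))"
proof -
  have S: "S_num n (n-k) k = (n choose k) - T_num n (k+1) k" by (rule S_eq[OF assms(2)])
  have le: "T_num n (k+1) k \<le> n choose k" by (rule T_le_choose)
  show ?thesis
  proof (intro conjI impI)
    show "int (S_num n (n - k) k) = int (n choose k) - int (T_num n (k + 1) k)"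
      using S le by simp
  next
    assume "k \<le> n - 1"
    then have "k + 1 \<le> n" using assms by simp
    then show TC: "T_num n (k + 1) k = C_num n (n - k) (n - k - 1)" by (rule T_C)
    show "int (C_num n (n - k) (n - k - 1)) = int (n choose k) - int (S_num n (n - k) k)"
      using S le TC by simp
  qed
qed

end
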